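(* Let $f \colon \mathbb{R}^2 \to \mathbb{R}$ be given by $f(u,v) = u^2 + |v|$. Then every BFGS sequence $((u_k,v_k))_{k\ge 0}$ for $f$ has a subsequence converging to a point of the line $\{(u,v) : v = 0\}$.
   Context: A sequence $(x_k)$ in $\mathbb{R}^n$ is a BFGS sequence for $f$ if $f$ is differentiable at each $x_k$ with $\nabla f(x_k) \neq 0$, and there exist parameters $0<\mu<\nu<1$ and a positive definite $n\times n$ matrix $H_0$ such that, with $s_k = x_{k+1}-x_k$, $y_k = \nabla f(x_{k+1}) - \nabla f(x_k)$, $V_k = I - \frac{s_k y_k^T}{s_k^T y_k}$ and $H_{k+1} = V_k H_k V_k^T + \frac{s_k s_k^T}{s_k^T y_k}$, one has for all $k=0,1,2,\dots$: $H_k \nabla f(x_k) \in -\mathbb{R}_+ s_k$, $f(x_{k+1}) \le f(x_k) + \mu \nabla f(x_k)^T s_k$, and $\nabla f(x_{k+1})^T s_k \ge \nu \nabla f(x_k)^T s_k$. *)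

theory Defs
  imports "HOL-Analysis.Analysis"
begin

definition grad :: "(real^'n \<Rightarrow> real) \<Rightarrow> real^'n \<Rightarrow> real^'n" where
  "grad f x = (THE D. GDERIV f x :> D)"

definition outer :: "real^'n \<Rightarrow> real^'n \<Rightarrow> real^'n^'n" where
  "outer u v = (\<chi> i j. u$i * v$j)"

definition pos_def_matrix :: "real^'n^'n \<Rightarrow> bool" where
  "pos_def_matrix A \<longleftrightarrow> transpose A = A \<and> (\<forall>v. v \<noteq> 0 \<longrightarrow> v \<bullet> (A *v v) > 0)"

primrec bfgs_H :: "(real^'n \<Rightarrow> real) \<Rightarrow> (nat \<Rightarrow> real^'n) \<Rightarrow> real^'n^'n \<Rightarrow> nat \<Rightarrow> real^'n^'n" where
  "bfgs_H f x H0 0 = H0"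
| "bfgs_H f x H0 (Suc k) =
     (let s = x (Suc k) - x k;
          y = grad f (x (Suc k)) - grad f (x k);
          V = mat 1 - (1 / (s \<bullet> y)) *\<^sub>R outer s y
      in V ** bfgs_H f x H0 k ** transpose V + (1 / (s \<bullet> y)) *\<^sub>R outer s s)"

definition bfgs_sequence :: "(real^'n \<Rightarrow> real) \<Rightarrow> (nat \<Rightarrow> real^'n) \<Rightarrow> bool" where
  "bfgs_sequence f x \<longleftrightarrow>
     (\<forall>k. f differentiable (at (x k)) \<and> grad f (x k) \<noteq> 0) \<and>
     (\<exists>\<mu> \<nu> H0. 0 < \<mu> \<and> \<mu> < \<nu> \<and> \<nu> < 1 \<and> pos_def_matrix H0 \<and>
        (\<forall>k. let s = x (Suc k) - x k; g = grad f (x k) in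
           (\<exists>t>0. bfgs_H f x H0 k *v g = - (t *\<^sub>R s)) \<and>
           f (x (Suc k)) \<le> f (x k) + \<mu> * (g \<bullet> s) \<and>
           grad f (x (Suc k)) \<bullet> s \<ge> \<nu> * (g \<bullet> s)))"

end

theory Submission
  imports Defs
begin


abbreviation FF :: "real^2 \<Rightarrow> real" where "FF \<equiv> (\<lambda>z::real^2. (z$1)^2 + \<bar>z$2\<bar>)"

lemma grad_unique:
  fixes f :: "real^'n \<Rightarrow> real"
  assumes "GDERIV f x :> D" shows "grad f x = D"
  unfolding grad_def
proof (rule the_equality)
  show "GDERIV f x :> D" by (rule assms)
  fix D' assume "GDERIV f x :> D'"
  then have "(\<lambda>h. h \<bullet> D') = (\<lambda>h. h \<bullet> D)"
    using assms unfolding gderiv_def by (rule has_derivative_unique)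
  then have "(D - D') \<bullet> D' = (D - D') \<bullet> D" by metis
  then have "(D - D') \<bullet> (D - D') = 0" by (simp add: inner_diff_right)
  then show "D' = D" by simp
qed

lemma FF_grad:
  assumes "z$2 \<noteq> 0"
  shows "grad FF z = vector [2 * z$1, sgn (z$2)]"
proof -
  define \<sigma> where "\<sigma> = sgn (z$2)"
  have "((\<lambda>w::real^2. (w$1)^2 + \<sigma> * w$2) has_derivative (\<lambda>h. h \<bullet> vector [2 * z$1, \<sigma>])) (at z)"
  proof -
    have "((\<lambda>w::real^2. (w$1)^2 + \<sigma> * w$2) has_derivative (\<lambda>h. 2 * z$1 * h$1 + \<sigma> * h$2)) (at z)"
      by (auto intro!: derivative_eq_intros bounded_linear.has_derivative[OF bounded_linear_vec_nth]
           simp: power2_eq_square algebra_simps)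
    moreover have "(\<lambda>h::real^2. 2 * z$1 * h$1 + \<sigma> * h$2) = (\<lambda>h. h \<bullet> vector [2 * z$1, \<sigma>])"
      by (auto simp: inner_vec_def sum_2 algebra_simps)
    ultimately show ?thesis by simp
  qed
  moreover have "open {w::real^2. \<sigma> * w$2 > 0}"
    by (intro open_Collect_less continuous_intros)
  moreover have "z \<in> {w::real^2. \<sigma> * w$2 > 0}" using assms by (auto simp: \<sigma>_def sgn_if)
  moreover have "\<And>w. w \<in> {w::real^2. \<sigma> * w$2 > 0} \<Longrightarrow> (w$1)^2 + \<sigma> * w$2 = FF w"
    using assms by (auto simp: \<sigma>_def sgn_if split: if_splits)
  ultimately have "(FF has_derivative (\<lambda>h. h \<bullet> vector [2 * z$1, \<sigma>])) (at z)"
    by (rule has_derivative_transform_within_open)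
  then show ?thesis unfolding \<sigma>_def by (intro grad_unique) (simp add: gderiv_def)
qed

lemma FF_nondiff:
  assumes "FF differentiable (at z)" shows "z$2 \<noteq> 0"
proof
  assume z2: "z$2 = 0"
  from assms obtain F' where F': "(FF has_derivative F') (at z)" unfolding differentiable_def by blast
  define e :: "real^2" where "e = axis 2 1"
  have lin: "linear F'" using F' has_derivative_linear by blast
  have "((\<lambda>t::real. z + t *\<^sub>R e) has_derivative (\<lambda>t. t *\<^sub>R e)) (at 0)"
    by (rule derivative_eq_intros refl)+ simp
  then have "((\<lambda>t. FF (z + t *\<^sub>R e)) has_derivative (\<lambda>t. F' (t *\<^sub>R e))) (at 0)"
  proof -
    have "(FF has_derivative F') (at ((\<lambda>t::real. z + t *\<^sub>R e) 0))" using F' by simp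
    from has_derivative_compose[OF \<open>((\<lambda>t::real. z + t *\<^sub>R e) has_derivative (\<lambda>t. t *\<^sub>R e)) (at 0)\<close> this]
    show ?thesis by simp
  qed
  moreover have "(\<lambda>t. F' (t *\<^sub>R e)) = (\<lambda>t. F' e * t)"
    using lin by (simp add: linear_scale mult.commute)
  moreover have "(\<lambda>t. FF (z + t *\<^sub>R e)) = (\<lambda>t. (z$1)^2 + \<bar>t\<bar>)"
    using z2 by (simp add: e_def fun_eq_iff axis_def)
  ultimately have D: "DERIV (\<lambda>t. (z$1)^2 + \<bar>t\<bar>) 0 :> F' e"
    by (simp add: has_field_derivative_def)
  have "DERIV (\<lambda>t. (z$1)^2 + \<bar>t\<bar> - t) 0 :> F' e - 1"
    using DERIV_diff[OF D DERIV_ident] by simp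
  then have "F' e - 1 = 0"
    by (rule DERIV_local_min[where d=1]) auto
  moreover have "DERIV (\<lambda>t. (z$1)^2 + \<bar>t\<bar> + t) 0 :> F' e + 1"
    using DERIV_add[OF D DERIV_ident] by simp
  then have "F' e + 1 = 0"
    by (rule DERIV_local_min[where d=1]) auto
  ultimately show False by simp
qed


lemma gs_bound:
  fixes u r h \<sigma> t p1 p2 \<nu> :: real
  assumes t: "t > 0" and sig: "\<sigma>*\<sigma> = 1" and e1: "p1 = -(u + r*\<sigma>)/t" and e2: "p2 = -(2*r*u + h*\<sigma>)/t"
    and wolfe: "2*p1^2 \<ge> (1-\<nu>)*(-(2*u*p1 + \<sigma>*p2))" and p1: "p1 \<noteq> 0" and nu: "\<nu> < 1"
    and c: "h - 2*r^2 > 0"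
  shows "-(2*u*p1 + \<sigma>*p2) \<ge> 4*(1-\<nu>)*(h - 2*r^2)"
proof -
  define w where "w = u + r*\<sigma>"
  define c where "c = h - 2*r^2"
  have G: "-(2*u*p1 + \<sigma>*p2) = (2*w^2 + c)/t"
  proof -
    have "-(2*u*p1 + \<sigma>*p2) = (2*u*(u + r*\<sigma>) + \<sigma>*(2*r*u + h*\<sigma>))/t"
      using t by (simp add: e1 e2 field_simps)
    also have "2*u*(u + r*\<sigma>) + \<sigma>*(2*r*u + h*\<sigma>) = 2*w^2 + c"
    proof -
      have "2*w^2 + c = 2*u*u + 4*u*r*\<sigma> + 2*r*r*(\<sigma>*\<sigma>) + h - 2*r*r"
        by (simp add: w_def c_def power2_eq_square algebra_simps)
      also have "\<dots> = 2*u*u + 4*u*r*\<sigma> + h*(\<sigma>*\<sigma>)" using sig by simp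
      finally show ?thesis by (simp add: algebra_simps)
    qed
    finally show ?thesis .
  qed
  have wne: "w \<noteq> 0" using p1 t by (simp add: e1 w_def)
  have w2: "w^2 > 0" using wne by simp
  have cpos: "c > 0" using c by (simp add: c_def)
  have p1sq: "p1^2 = w^2/t^2" by (simp add: e1 w_def power_divide power2_eq_square algebra_simps)
  have "2*w^2/t^2 \<ge> (1-\<nu>)*((2*w^2 + c)/t)" using wolfe G p1sq by simp
  then have "2*w^2/t^2 * t^2 \<ge> (1-\<nu>)*((2*w^2 + c)/t) * t^2" using t by (intro mult_right_mono) auto
  moreover have "2*w^2/t^2 * t^2 = 2*w^2" using t by simp
  moreover have "(1-\<nu>)*((2*w^2 + c)/t) * t^2 = (1-\<nu>)*(2*w^2 + c)*t" using t by (simp add: power2_eq_square)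
  ultimately have "2*w^2 \<ge> (1-\<nu>)*(2*w^2 + c)*t" by simp
  then have "2*w^2 * ((2*w^2 + c)/t) \<ge> (1-\<nu>)*(2*w^2 + c)*t * ((2*w^2 + c)/t)"
    using t cpos w2 by (intro mult_right_mono) auto
  moreover have "(1-\<nu>)*(2*w^2 + c)*t * ((2*w^2 + c)/t) = (1-\<nu>)*(2*w^2 + c)^2"
    using t by (simp add: power2_eq_square)
  ultimately have A: "2*w^2 * ((2*w^2 + c)/t) \<ge> (1-\<nu>)*(2*w^2 + c)^2" by simp
  have B: "(2*w^2 + c)^2 \<ge> 8*w^2*c"
  proof -
    have "(2*w^2 + c)^2 - 8*w^2*c = (2*w^2 - c)^2" by (simp add: power2_eq_square algebra_simps)
    then show ?thesis by (metis diff_ge_0_iff_ge zero_le_power2)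
  qed
  have "2*w^2 * ((2*w^2 + c)/t) \<ge> 2*w^2 * (4*(1-\<nu>)*c)"
  proof -
    have "(1-\<nu>)*(2*w^2 + c)^2 \<ge> (1-\<nu>)*(8*w^2*c)" using B nu by (intro mult_left_mono) auto
    then show ?thesis using A by (simp add: algebra_simps)
  qed
  then have "(2*w^2 + c)/t \<ge> 4*(1-\<nu>)*c" using w2 by (metis mult_le_cancel_left_pos zero_less_mult_iff zero_less_numeral)
  then show ?thesis using G by (simp add: c_def)
qed


lemma quad2:
  fixes H :: "real^2^2" and s y z :: "real^2" and c :: real
  shows "z \<bullet> (((mat 1 - c *\<^sub>R outer s y) ** H ** transpose (mat 1 - c *\<^sub>R outer s y) + c *\<^sub>R outer s s) *v z)
     = (z - (c*(s\<bullet>z)) *\<^sub>R y) \<bullet> (H *v (z - (c*(s\<bullet>z)) *\<^sub>R y)) + c*(s\<bullet>z)^2"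
  by (simp add: inner_vec_def sum_2 matrix_matrix_mult_def matrix_vector_mult_def transpose_def outer_def mat_def
      algebra_simps power2_eq_square)

lemma upd2:
  fixes H :: "real^2^2" and s :: "real^2"
  assumes sym: "H$1$2 = H$2$1" and s1: "s$1 \<noteq> 0"
  defines "y \<equiv> (vector [2 * s$1, 0] :: real^2)"
  defines "H' \<equiv> (mat 1 - (1/(s\<bullet>y)) *\<^sub>R outer s y) ** H ** transpose (mat 1 - (1/(s\<bullet>y)) *\<^sub>R outer s y) + (1/(s\<bullet>y)) *\<^sub>R outer s s"
  shows "H'$1$1 = 1/2" "H'$1$2 = (s$2/s$1)/2" "H'$2$1 = (s$2/s$1)/2"
        "H'$2$2 = (s$2/s$1)^2 * H$1$1 - 2*(s$2/s$1)*H$1$2 + H$2$2 + (s$2/s$1)^2/2"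
  using s1 sym
  by (simp_all add: H'_def y_def inner_vec_def sum_2 matrix_matrix_mult_def transpose_def outer_def mat_def
      field_simps power2_eq_square)

lemma pd_update:
  fixes H :: "real^2^2" and s y :: "real^2"
  assumes pd: "pos_def_matrix H" and sy: "s \<bullet> y > 0"
  shows "pos_def_matrix ((mat 1 - (1/(s\<bullet>y)) *\<^sub>R outer s y) ** H ** transpose (mat 1 - (1/(s\<bullet>y)) *\<^sub>R outer s y) + (1/(s\<bullet>y)) *\<^sub>R outer s s)"
    (is "pos_def_matrix ?H'")
proof -
  define c where "c = 1/(s\<bullet>y)"
  have c: "c > 0" using sy by (simp add: c_def)
  have Hs: "transpose H = H" and Hp: "\<And>v. v \<noteq> 0 \<Longrightarrow> v \<bullet> (H *v v) > 0"
    using pd unfolding pos_def_matrix_def by auto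
  have sym: "H$1$2 = H$2$1" using arg_cong[OF Hs, of "\<lambda>M. M$1$2"] by (simp add: transpose_def)
  have tadd: "\<And>A B :: real^2^2. transpose (A + B) = transpose A + transpose B"
    by (simp add: transpose_def vec_eq_iff)
  have tout: "transpose (outer s s) = outer s s"
    by (simp add: transpose_def outer_def vec_eq_iff mult.commute)
  have "transpose ?H' = ?H'"
    by (simp add: tadd transpose_scalar tout matrix_transpose_mul Hs matrix_mul_assoc)
  moreover have "v \<bullet> (?H' *v v) > 0" if v: "v \<noteq> 0" for v
  proof -
    define w where "w = v - (c*(s\<bullet>v)) *\<^sub>R y"
    have q: "v \<bullet> (?H' *v v) = w \<bullet> (H *v w) + c*(s\<bullet>v)^2"
      unfolding w_def c_def by (rule quad2[of v "1/(s\<bullet>y)" s y H])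
    have wge: "w \<bullet> (H *v w) \<ge> 0" using Hp[of w] by (cases "w = 0") auto
    show ?thesis
    proof (cases "s \<bullet> v = 0")
      case True
      then have "w = v" by (simp add: w_def)
      then show ?thesis using q Hp[OF v] True by simp
    next
      case False
      then have "c*(s\<bullet>v)^2 > 0" using c by simp
      then show ?thesis using q wge by simp
    qed
  qed
  ultimately show ?thesis unfolding pos_def_matrix_def by blast
qed

lemma gs_neg:
  fixes H :: "real^2^2" and g s :: "real^2"
  assumes "pos_def_matrix H" "g \<noteq> 0" "t > 0" "H *v g = - (t *\<^sub>R s)"
  shows "g \<bullet> s < 0"
proof -
  have "g \<bullet> (H *v g) > 0" using assms(1,2) unfolding pos_def_matrix_def by blast
  then have "- t * (g \<bullet> s) > 0" using assms(4) by simp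
  then show ?thesis using assms(3) by (simp add: mult_less_0_iff)
qed

lemma cross_bound:
  fixes u u' v v' \<mu> G \<delta> :: real
  assumes G: "G = 2*u*(u'-u) + sgn v * (v' - v)" and Gneg: "G < 0"
    and arm: "u'^2 + \<bar>v'\<bar> \<le> u^2 + \<bar>v\<bar> + \<mu>*G" and mu: "\<mu> > 0"
    and v: "v \<noteq> 0" and v': "v' \<noteq> 0" and sg: "sgn v' \<noteq> sgn v" and d: "\<bar>v'\<bar> \<ge> \<delta>"
  shows "-G > 2*\<delta>"
proof -
  have sq: "u'^2 - u^2 \<ge> 2*u*(u'-u)"
  proof -
    have "0 \<le> (u'-u)^2" by simp
    also have "(u'-u)^2 = u'^2 - u^2 - 2*u*(u'-u)" by (simp add: power2_eq_square algebra_simps)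
    finally show ?thesis by simp
  qed
  have muG: "\<mu>*G < 0" using mu Gneg by (simp add: mult_pos_neg)
  have "(v > 0 \<and> v' < 0) \<or> (v < 0 \<and> v' > 0)" using v v' sg by (auto simp: sgn_if split: if_splits)
  then show ?thesis
  proof
    assume "v > 0 \<and> v' < 0"
    then have "G = 2*u*(u'-u) + (v' - v)" "\<bar>v'\<bar> = -v'" "\<bar>v\<bar> = v" using G by auto
    then show ?thesis using arm sq muG d by linarith
  next
    assume "v < 0 \<and> v' > 0"
    then have "G = 2*u*(u'-u) - (v' - v)" "\<bar>v'\<bar> = v'" "\<bar>v\<bar> = -v" using G by auto
    then show ?thesis using arm sq muG d by linarith
  qed
qed

theorem corollary4p4:
  fixes x :: "nat \<Rightarrow> real^2"
  assumes "bfgs_sequence (\<lambda>z::real^2. (z$1)^2 + \<bar>z$2\<bar>) x"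
  shows "\<exists>r p. strict_mono r \<and> (x \<circ> r) \<longlonglongrightarrow> p \<and> p$2 = 0"
proof -
  define g where "g k = grad FF (x k)" for k
  define s where "s k = x (Suc k) - x k" for k
  define y where "y k = g (Suc k) - g k" for k
  obtain \<mu> \<nu> H0 where diff: "\<And>k. FF differentiable (at (x k)) \<and> grad FF (x k) \<noteq> 0"
     and mu: "0 < \<mu>" "\<mu> < \<nu>" "\<nu> < 1" and pd0: "pos_def_matrix H0"
     and step: "\<forall>k. let s = x (Suc k) - x k; g = grad FF (x k) in
           (\<exists>t>0. bfgs_H FF x H0 k *v g = - (t *\<^sub>R s)) \<and>
           FF (x (Suc k)) \<le> FF (x k) + \<mu> * (g \<bullet> s) \<and>
           grad FF (x (Suc k)) \<bullet> s \<ge> \<nu> * (g \<bullet> s)"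
    using assms unfolding bfgs_sequence_def by blast
  define H where "H k = bfgs_H FF x H0 k" for k
  have dir: "\<exists>t>0. H k *v g k = - (t *\<^sub>R s k)" for k
    using step unfolding H_def g_def s_def Let_def by blast
  have arm: "FF (x (Suc k)) \<le> FF (x k) + \<mu> * (g k \<bullet> s k)" for k
    using step unfolding H_def g_def s_def Let_def by blast
  have wolfe: "g (Suc k) \<bullet> s k \<ge> \<nu> * (g k \<bullet> s k)" for k
    using step unfolding H_def g_def s_def Let_def by blast
  have vne: "x k $ 2 \<noteq> 0" for k using diff FF_nondiff by blast
  have gne: "g k \<noteq> 0" for k using diff g_def by simp
  have gk: "g k = vector [2 * x k $1, sgn (x k $2)]" for k
    using FF_grad[OF vne] g_def by simp
  have Hsuc: "H (Suc k) = (mat 1 - (1/(s k \<bullet> y k)) *\<^sub>R outer (s k) (y k)) ** H k ** transpose (mat 1 - (1/(s k \<bullet> y k)) *\<^sub>R outer (s k) (y k)) + (1/(s k \<bullet> y k)) *\<^sub>R outer (s k) (s k)" for k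
    by (simp add: H_def s_def y_def g_def Let_def)
  have pdk: "pos_def_matrix (H k) \<and> g k \<bullet> s k < 0 \<and> s k \<bullet> y k > 0" for k
  proof -
    have P: "pos_def_matrix (H k)" for k
    proof (induction k)
      case 0 then show ?case using pd0 by (simp add: H_def)
    next
      case (Suc k)
      obtain t where t: "t > 0" "H k *v g k = - (t *\<^sub>R s k)" using dir by blast
      have "g k \<bullet> s k < 0" using gs_neg[OF Suc gne t] .
      moreover have "s k \<bullet> y k = g (Suc k) \<bullet> s k - g k \<bullet> s k"
        by (simp add: y_def inner_diff_right inner_commute)
      moreover have "(\<nu> - 1) * (g k \<bullet> s k) > 0"
        using \<open>g k \<bullet> s k < 0\<close> mu by (intro mult_neg_neg) auto
      moreover have "(\<nu> - 1) * (g k \<bullet> s k) = \<nu> * (g k \<bullet> s k) - g k \<bullet> s k"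
        by (simp add: algebra_simps)
      ultimately have "s k \<bullet> y k > 0" using wolfe[of k] by linarith
      then show ?case unfolding Hsuc by (rule pd_update[OF Suc])
    qed
    obtain t where t: "t > 0" "H k *v g k = - (t *\<^sub>R s k)" using dir by blast
    have gs: "g k \<bullet> s k < 0" using gs_neg[OF P gne t] .
    moreover have "s k \<bullet> y k = g (Suc k) \<bullet> s k - g k \<bullet> s k"
      by (simp add: y_def inner_diff_right inner_commute)
    moreover have "(\<nu> - 1) * (g k \<bullet> s k) > 0"
      using gs mu by (intro mult_neg_neg) auto
    moreover have "(\<nu> - 1) * (g k \<bullet> s k) = \<nu> * (g k \<bullet> s k) - g k \<bullet> s k"
      by (simp add: algebra_simps)
    ultimately have "s k \<bullet> y k > 0" using wolfe[of k] by linarith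
    then show ?thesis using P gs by blast
  qed
  have Fnn: "FF z \<ge> 0" for z :: "real^2" by simp
  have Fdec: "FF (x (Suc k)) \<le> FF (x k)" for k
    using arm[of k] pdk[of k] mu by (smt (verit) mult_pos_neg)
  have Fle0: "FF (x k) \<le> FF (x 0)" for k
    by (induction k) (use Fdec order_trans in blast)+
  have tele: "\<mu> * (\<Sum>i<n. - (g i \<bullet> s i)) \<le> FF (x 0) - FF (x n)" for n
  proof (induction n)
    case 0 then show ?case by simp
  next
    case (Suc n)
    have "\<mu> * (\<Sum>i<Suc n. - (g i \<bullet> s i)) = \<mu> * (\<Sum>i<n. - (g i \<bullet> s i)) - \<mu> * (g n \<bullet> s n)"
      by (simp add: algebra_simps)
    then show ?case using Suc arm[of n] by linarith
  qed
  have summ: "summable (\<lambda>k. - (g k \<bullet> s k))"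
  proof (rule summableI_nonneg_bounded)
    show "0 \<le> - (g k \<bullet> s k)" for k using pdk[of k] by simp
    show "(\<Sum>i<n. - (g i \<bullet> s i)) \<le> FF (x 0) / \<mu>" for n
    proof -
      have "\<mu> * (\<Sum>i<n. - (g i \<bullet> s i)) \<le> FF (x 0)" using tele[of n] Fnn[of "x n"] by linarith
      then show ?thesis using mu by (simp add: pos_le_divide_eq mult.commute)
    qed
  qed
  have lim0: "(\<lambda>k. - (g k \<bullet> s k)) \<longlonglongrightarrow> 0"
    using summable_LIMSEQ_zero[OF summ] .
  have key: "\<exists>k\<ge>N. \<bar>x k $ 2\<bar> < \<delta>" if dpos: "\<delta> > 0" for \<delta> N
  proof (rule ccontr)
    assume "\<not> (\<exists>k\<ge>N. \<bar>x k $ 2\<bar> < \<delta>)"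
    then have big: "\<bar>x k $2\<bar> \<ge> \<delta>" if "k \<ge> N" for k using that by force
    have "eventually (\<lambda>k. - (g k \<bullet> s k) < 2*\<delta>) sequentially"
      using lim0 dpos by (intro order_tendstoD(2)) auto
    then obtain M0 where M0: "\<And>k. k \<ge> M0 \<Longrightarrow> - (g k \<bullet> s k) < 2*\<delta>"
      unfolding eventually_sequentially by blast
    define M where "M = max N M0"
    have gs_expr: "g k \<bullet> s k = 2 * x k$1 * (x (Suc k)$1 - x k$1) + sgn (x k$2) * (x (Suc k)$2 - x k$2)" for k
      by (simp add: gk s_def inner_vec_def sum_2)
    have nocross: "sgn (x (Suc k) $2) = sgn (x k $2)" if kM: "k \<ge> M" for k
    proof (rule ccontr)
      assume ne: "sgn (x (Suc k) $2) \<noteq> sgn (x k $2)"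
      have "-(g k \<bullet> s k) > 2*\<delta>"
      proof (rule cross_bound[OF gs_expr])
        show "g k \<bullet> s k < 0" using pdk[of k] by simp
        show "(x (Suc k)$1)^2 + \<bar>x (Suc k)$2\<bar> \<le> (x k$1)^2 + \<bar>x k$2\<bar> + \<mu> * (g k \<bullet> s k)"
          using arm[of k] by simp
        show "\<mu> > 0" using mu by simp
        show "x k$2 \<noteq> 0" "x (Suc k)$2 \<noteq> 0" by (rule vne)+
        show "sgn (x (Suc k) $2) \<noteq> sgn (x k $2)" by (rule ne)
        show "\<bar>x (Suc k)$2\<bar> \<ge> \<delta>" using big[of "Suc k"] kM by (simp add: M_def)
      qed
      then show False using M0[of k] kM by (simp add: M_def)
    qed
    have sgconst: "sgn (x k $2) = sgn (x M $2)" if "k \<ge> M" for k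
      using that
    proof (induction k rule: dec_induct)
      case base show ?case by simp
    next
      case (step k) then show ?case using nocross[of k] by simp
    qed
    define \<sigma> where "\<sigma> = sgn (x M $2)"
    have \<sigma>\<sigma>: "\<sigma>*\<sigma> = 1" using vne[of M] by (simp add: \<sigma>_def sgn_if)
    have gkM: "g k = vector [2 * x k$1, \<sigma>]" if "k \<ge> M" for k
      using gk[of k] sgconst[OF that] by (simp add: \<sigma>_def)
    have ykM: "y k = vector [2 * s k$1, 0]" if "k \<ge> M" for k
      using gkM[of k] gkM[of "Suc k"] that by (simp add: y_def s_def vec_eq_iff forall_2 algebra_simps)
    have s1ne: "s k $1 \<noteq> 0" if "k \<ge> M" for k
    proof
      assume "s k $1 = 0"
      then have "y k = 0" using ykM[OF that] by (simp add: vec_eq_iff forall_2)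
      then show False using pdk[of k] by simp
    qed
    have symk: "H k $1$2 = H k $2$1" for k
    proof -
      have "transpose (H k) = H k" using pdk[of k] unfolding pos_def_matrix_def by blast
      from arg_cong[OF this, of "\<lambda>A. A$1$2"] show ?thesis by (simp add: transpose_def)
    qed
    have Hent: "H (Suc k)$1$1 = 1/2 \<and> H (Suc k)$1$2 = (s k$2/s k$1)/2 \<and>
       H (Suc k)$2$2 = (s k$2/s k$1)^2 * H k$1$1 - 2*(s k$2/s k$1)*H k$1$2 + H k$2$2 + (s k$2/s k$1)^2/2"
      if "k \<ge> M" for k
    proof -
      note U = upd2[OF symk[of k] s1ne[OF that]]
      have "H (Suc k) = (mat 1 - (1/(s k \<bullet> vector [2 * s k$1, 0])) *\<^sub>R outer (s k) (vector [2 * s k$1, 0])) ** H k ** transpose (mat 1 - (1/(s k \<bullet> vector [2 * s k$1, 0])) *\<^sub>R outer (s k) (vector [2 * s k$1, 0])) + (1/(s k \<bullet> vector [2 * s k$1, 0])) *\<^sub>R outer (s k) (s k)"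
        using Hsuc[of k] ykM[OF that] by simp
      then show ?thesis using U by simp
    qed
    define c where "c k = H k$2$2 - 2*(H k$1$2)^2" for k
    have cSuc: "c (Suc k) = (s k$2/s k$1)^2 * H k$1$1 - 2*(s k$2/s k$1)*H k$1$2 + H k$2$2" if "k \<ge> M" for k
      using Hent[OF that] by (simp add: c_def power2_eq_square algebra_simps)
    have cpos: "c (Suc k) > 0" if "k \<ge> M" for k
    proof -
      define \<rho> where "\<rho> = s k$2/s k$1"
      have "(vector [-\<rho>, 1] :: real^2) \<noteq> 0" by (simp add: vec_eq_iff forall_2)
      then have "(vector [-\<rho>, 1] :: real^2) \<bullet> (H k *v vector [-\<rho>, 1]) > 0"
        using pdk[of k] unfolding pos_def_matrix_def by blast
      moreover have "(vector [-\<rho>, 1] :: real^2) \<bullet> (H k *v vector [-\<rho>, 1]) = \<rho>^2 * H k$1$1 - 2*\<rho>*H k$1$2 + H k$2$2"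
        using symk[of k] by (simp add: inner_vec_def sum_2 matrix_vector_mult_def power2_eq_square algebra_simps)
      ultimately show ?thesis using cSuc[OF that] \<rho>_def by simp
    qed
    have a_half: "H k$1$1 = 1/2" if "k \<ge> Suc M" for k
      using Hent[of "k - 1"] that by (cases k) auto
    have cmono: "c (Suc k) \<ge> c k" if "k \<ge> Suc M" for k
    proof -
      define \<rho> where "\<rho> = s k$2/s k$1"
      have "c (Suc k) - c k = (\<rho> - 2 * H k$1$2)^2/2"
        using cSuc[of k] that a_half[OF that] by (simp add: c_def \<rho>_def power2_eq_square algebra_simps)
      moreover have "(\<rho> - 2 * H k$1$2)^2/2 \<ge> 0" by simp
      ultimately show ?thesis by linarith
    qed
    have cge: "c k \<ge> c (Suc M)" if "k \<ge> Suc M" for k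
      using that
    proof (induction k rule: dec_induct)
      case base show ?case by simp
    next
      case (step k) then show ?case using cmono[of k] by linarith
    qed
    have c0: "c (Suc M) > 0" using cpos[of M] by simp
    have gsb: "-(g k \<bullet> s k) \<ge> 4*(1-\<nu>)*c (Suc M)" if kS: "k \<ge> Suc M" for k
    proof -
      obtain t where t: "t > 0" "H k *v g k = - (t *\<^sub>R s k)" using dir by blast
      have kM: "k \<ge> M" using kS by simp
      have a: "H k$1$1 = 1/2" using a_half[OF kS] .
      have c1: "(H k *v g k)$1 = x k$1 + H k$1$2 * \<sigma>"
        using a gkM[OF kM] by (simp add: matrix_vector_mult_def sum_2)
      have c2: "(H k *v g k)$2 = 2 * H k$1$2 * x k$1 + H k$2$2 * \<sigma>"
        using symk[of k] gkM[OF kM] by (simp add: matrix_vector_mult_def sum_2)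
      have d1: "(H k *v g k)$1 = -(t * s k$1)" and d2: "(H k *v g k)$2 = -(t * s k$2)"
        using t(2) by simp_all
      have e1: "s k$1 = -(x k$1 + H k$1$2 * \<sigma>)/t" using c1 d1 t(1) by (simp add: field_simps)
      have e2: "s k$2 = -(2 * H k$1$2 * x k$1 + H k$2$2 * \<sigma>)/t" using c2 d2 t(1) by (simp add: field_simps)
      have gsx: "g k \<bullet> s k = 2 * x k$1 * s k$1 + \<sigma> * s k$2"
        using gkM[OF kM] by (simp add: inner_vec_def sum_2)
      have sy: "s k \<bullet> y k = 2 * (s k$1)^2"
        using ykM[OF kM] by (simp add: inner_vec_def sum_2 power2_eq_square)
      have sy2: "s k \<bullet> y k = g (Suc k) \<bullet> s k - g k \<bullet> s k"
        by (simp add: y_def inner_diff_right inner_commute)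
      have "(1-\<nu>) * (-(g k \<bullet> s k)) = \<nu> * (g k \<bullet> s k) - g k \<bullet> s k" by (simp add: algebra_simps)
      then have "(1-\<nu>) * (-(g k \<bullet> s k)) \<le> 2 * (s k$1)^2"
        using wolfe[of k] sy sy2 by linarith
      then have wol: "2 * (s k$1)^2 \<ge> (1-\<nu>) * (-(2 * x k$1 * s k$1 + \<sigma> * s k$2))"
        unfolding gsx .
      have ck: "c k > 0" using cge[OF kS] c0 by linarith
      then have ck': "H k$2$2 - 2*(H k$1$2)^2 > 0" by (simp add: c_def)
      have "-(2 * x k$1 * s k$1 + \<sigma> * s k$2) \<ge> 4*(1-\<nu>)*(H k$2$2 - 2*(H k$1$2)^2)"
        by (rule gs_bound[OF t(1) \<sigma>\<sigma> e1 e2 wol s1ne[OF kM] mu(3) ck'])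
      moreover have "4*(1-\<nu>)*c k \<ge> 4*(1-\<nu>)*c (Suc M)"
        using cge[OF kS] mu by (intro mult_left_mono) auto
      ultimately show ?thesis using gsx by (simp add: c_def)
    qed
    have "4*(1-\<nu>)*c (Suc M) > 0" using c0 mu by simp
    then have "eventually (\<lambda>k. - (g k \<bullet> s k) < 4*(1-\<nu>)*c (Suc M)) sequentially"
      using lim0 by (intro order_tendstoD(2)) auto
    then obtain M1 where M1: "\<And>k. k \<ge> M1 \<Longrightarrow> - (g k \<bullet> s k) < 4*(1-\<nu>)*c (Suc M)"
      unfolding eventually_sequentially by blast
    show False using M1[of "max M1 (Suc M)"] gsb[of "max M1 (Suc M)"] by simp
  qed
  have bnd: "bounded (range x)"
  proof -
    have "norm (x k) \<le> 1 + 2 * ((x 0$1)^2 + \<bar>x 0$2\<bar>)" for k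
    proof -
      have "norm (x k) \<le> \<bar>x k$1\<bar> + \<bar>x k$2\<bar>" using norm_le_l1_cart[of "x k"] by (simp add: sum_2)
      moreover have "\<bar>x k$1\<bar> \<le> 1 + (x k$1)^2"
      proof (cases "\<bar>x k$1\<bar> \<le> 1")
        case False
        then have "\<bar>x k$1\<bar> * 1 \<le> \<bar>x k$1\<bar> * \<bar>x k$1\<bar>" by (intro mult_left_mono) auto
        then show ?thesis by (simp add: power2_eq_square)
      qed (simp add: add_increasing2)
      moreover have "(x k$1)^2 + \<bar>x k$2\<bar> \<le> (x 0$1)^2 + \<bar>x 0$2\<bar>" using Fle0[of k] by simp
      moreover have "(x k$1)^2 \<ge> 0" "(x 0$1)^2 \<ge> 0" "\<bar>x k$2\<bar> \<ge> 0" "\<bar>x 0$2\<bar> \<ge> 0" by simp_all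
      ultimately show ?thesis by (smt (verit))
    qed
    then show ?thesis unfolding bounded_iff by blast
  qed
  obtain f where f: "\<And>n. \<bar>x (f n) $2\<bar> < 1/real (Suc n) \<and> f n < f (Suc n)"
  proof -
    have "\<exists>f. \<forall>n. \<bar>x (f n) $2\<bar> < 1/real (Suc n) \<and> f n < f (Suc n)"
    proof (rule dependent_nat_choice[where P="\<lambda>n k. \<bar>x k $2\<bar> < 1/real (Suc n)" and Q="\<lambda>n k k'. k < k'"])
      show "\<exists>k. \<bar>x k $2\<bar> < 1/real (Suc 0)" using key[of 1 0] by auto
      fix k n assume "\<bar>x k $2\<bar> < 1/real (Suc n)"
      obtain k' where "k' \<ge> Suc k" "\<bar>x k' $2\<bar> < 1/real (Suc (Suc n))"
        using key[of "1/real (Suc (Suc n))" "Suc k"] by auto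
      then show "\<exists>k'. \<bar>x k' $2\<bar> < 1/real (Suc (Suc n)) \<and> k < k'" by auto
    qed
    then show ?thesis using that by blast
  qed
  have smf: "strict_mono f" using f by (simp add: strict_mono_Suc_iff)
  have "bounded (range (x \<circ> f))" using bnd by (rule bounded_subset) auto
  then obtain l r2 where r2: "strict_mono r2" "((x \<circ> f) \<circ> r2) \<longlonglongrightarrow> l"
    using bounded_imp_convergent_subsequence by blast
  have "(\<lambda>n. ((x \<circ> f) \<circ> r2) n $ 2) \<longlonglongrightarrow> l$2" using r2(2) by (rule tendsto_vec_nth)
  moreover have "(\<lambda>n. ((x \<circ> f) \<circ> r2) n $ 2) \<longlonglongrightarrow> 0"
  proof (rule LIMSEQ_norm_0)
    fix n
    have "\<bar>x (f (r2 n)) $2\<bar> < 1/real (Suc (r2 n))" using f by blast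
    also have "\<dots> \<le> 1/real (Suc n)" using seq_suble[OF r2(1), of n] by (simp add: frac_le)
    finally show "norm (((x \<circ> f) \<circ> r2) n $ 2) < 1/real (Suc n)" by simp
  qed
  ultimately have "l$2 = 0" using LIMSEQ_unique by blast
  moreover have "strict_mono (f \<circ> r2)" using smf r2(1) by (rule strict_mono_o)
  ultimately show ?thesis using r2(2) by (metis comp_assoc)
qed
end
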